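(* Consider the one-dimensional Approximate Hierarchical Heavy Hitters problem over a rooted tree $T$ all of whose leaves have depth $h$, so the lattice has $H=h+1$ nodes (depths $0,\dots,h$). Let $\phi\in(0,1]$ and let $\epsilon>0$ be such that $1/\epsilon$ is a positive integer. Run the one-dimensional algorithm described in the context (one Space Saving instance with $1/\epsilon$ counters per depth, followed by the one-dimensional output procedure with threshold $\phi$). Then the algorithm stores $H\cdot(1/\epsilon)$ counters, i.e. uses $O(H/\epsilon)$ space, and its output set $P$ together with the reported values $f_{\min}(p),f_{\max}(p)$ for $p\in P$ satisfies the Accuracy and Coverage requirements: (Accuracy) for all $p\in P$, $f_{\min}(p)\le f(p)\le f_{\max}(p)$ and $f_{\max}(p)-f_{\min}(p)\le\epsilon N$; (Coverage) for every prefix $p\notin P$, $F_p<\phi N$, where $F_p$ is the conditioned count of $p$ with respect to $P$.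
   Context: Hierarchy: a rooted tree $T$ in which every leaf has depth $h$; nodes are prefixes, leaves are fully specified elements. For prefixes $e,p$, $e\preceq p$ means $p$ is an ancestor of $e$ or equal to $e$; $e\prec p$ means $e\preceq p$, $e\ne p$. The lattice node (label) of a prefix is its depth. Each non-root prefix $p$ has a parent $\mathrm{par}(p)$. Stream: a sequence of updates $(e,c)$ with $e$ fully specified and $c$ a positive integer. $f(e)$ is the sum of the $c$'s of updates with element $e$; $N=\sum_e f(e)$. The unconditioned count of a prefix $p$ is $f(p)=\sum_{e \text{ fully specified},\,e\preceq p} f(e)$. For a set $P$ of prefixes and a prefix $p$, with $P_p=\{q\in P:q\prec p\}$, the conditioned count is $F_p=\sum f(e)$ over fully specified $e$ with $e\preceq p$ and $e\not\preceq q$ for all $q\in P_p$. Space Saving with $m$ counters: maintains a set $T'$ of at most $m$ items, each with a counter $c(i)$ and an error value $\mathrm{err}(i)$. On input $(i,c)$: if $i\in T'$, set $c(i)\mathrel{+}=c$; else if $|T'|<m$, add $i$ with $c(i)=c$, $\mathrm{err}(i)=0$; else remove an item $j$ with the smallest counter and add $i$ with $c(i)=c(j)+c$, $\mathrm{err}(i)=c(j)$. Estimates for item $i$: if $i\in T'$, $f_{\max}(i)=c(i)$ and $f_{\min}(i)=c(i)-\mathrm{err}(i)$; otherwise $f_{\min}(i)=0$ and $f_{\max}(i)$ equals the smallest counter if $|T'|=m$, and $0$ otherwise. Algorithm: keep one Space Saving instance with $1/\epsilon$ counters for each depth $0,\dots,h$. On update $(e,c)$, for every prefix $p$ with $e\preceq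 p$, feed $(p,c)$ to the instance for the depth of $p$. For a prefix $p$, $f_{\min}(p),f_{\max}(p)$ denote the estimates of the instance for $p$'s depth. Output procedure with threshold $\phi$: set $s_e=0$ for all prefixes; process all prefixes in postorder (each prefix after all its descendants); for prefix $e$: if $f_{\max}(e)-s_e\ge\phi N$, output $e$ (put it in $P$) together with $f_{\min}(e),f_{\max}(e)$, and (if $e$ is not the root) add $f_{\min}(e)$ to $s_{\mathrm{par}(e)}$; otherwise (if $e$ is not the root) add $s_e$ to $s_{\mathrm{par}(e)}$. *)

theory Defs
  imports Complex_Main "HOL-Library.Sublist"
begin

text \<open>A prefix (tree node) is represented by the path from the root, i.e. a list of
child labels; the root is the empty list, the parent of a non-root node p is butlast p,
the depth of p is length p.  For prefixes e, p: e \<preceq> p (p is an ancestor of e or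
equal to e) is  prefix p e ; e \<prec> p is  strict_prefix p e.\<close>

definition hierarchy :: "'a list set \<Rightarrow> nat \<Rightarrow> bool" where
  "hierarchy T h \<longleftrightarrow> finite T \<and> [] \<in> T
     \<and> (\<forall>p\<in>T. \<forall>q. prefix q p \<longrightarrow> q \<in> T)
     \<and> (\<forall>p\<in>T. (\<not> (\<exists>q\<in>T. strict_prefix p q)) \<longrightarrow> length p = h)"

definition fully_specified :: "'a list set \<Rightarrow> 'a list \<Rightarrow> bool" where
  "fully_specified T e \<longleftrightarrow> e \<in> T \<and> \<not> (\<exists>q\<in>T. strict_prefix e q)"

type_synonym 'a stream = "('a list \<times> nat) list"

definition valid_stream :: "'a list set \<Rightarrow> 'a stream \<Rightarrow> bool" where
  "valid_stream T xs \<longleftrightarrow> (\<forall>(e,c)\<in>set xs. fully_specified T e \<and> c > 0)"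

definition total :: "'a stream \<Rightarrow> nat" where
  "total xs = sum_list (map snd xs)"

definition ucount :: "'a stream \<Rightarrow> 'a list \<Rightarrow> nat" where
  "ucount xs p = sum_list (map snd (filter (\<lambda>(e,c). prefix p e) xs))"

definition ccount :: "'a stream \<Rightarrow> 'a list set \<Rightarrow> 'a list \<Rightarrow> nat" where
  "ccount xs P p = sum_list (map snd (filter (\<lambda>(e,c). prefix p e \<and>
      \<not> (\<exists>q\<in>P. strict_prefix p q \<and> prefix q e)) xs))"

text \<open>State: partial map from monitored items to (counter, error).\<close>
type_synonym 'b ss_state = "'b \<Rightarrow> (nat \<times> nat) option"

inductive ss_step :: "nat \<Rightarrow> 'b ss_state \<Rightarrow> 'b \<times> nat \<Rightarrow> 'b ss_state \<Rightarrow> bool" for m where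
  present: "S i = Some (x, er) \<Longrightarrow> ss_step m S (i, c) (S(i \<mapsto> (x + c, er)))"
| add: "S i = None \<Longrightarrow> card (dom S) < m \<Longrightarrow> ss_step m S (i, c) (S(i \<mapsto> (c, 0)))"
| replace: "S i = None \<Longrightarrow> \<not> card (dom S) < m \<Longrightarrow> S j = Some (cj, ej) \<Longrightarrow>
     (\<forall>k x y. S k = Some (x, y) \<longrightarrow> cj \<le> x) \<Longrightarrow>
     ss_step m S (i, c) ((S(j := None))(i \<mapsto> (cj + c, cj)))"

inductive ss_run :: "nat \<Rightarrow> 'b ss_state \<Rightarrow> ('b \<times> nat) list \<Rightarrow> 'b ss_state \<Rightarrow> bool" for m where
  Nil: "ss_run m S [] S"
| Cons: "ss_step m S x S1 \<Longrightarrow> ss_run m S1 xs S2 \<Longrightarrow> ss_run m S (x # xs) S2"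

definition ss_fmin :: "'b ss_state \<Rightarrow> 'b \<Rightarrow> nat" where
  "ss_fmin S i = (case S i of Some (c, er) \<Rightarrow> c - er | None \<Rightarrow> 0)"

definition ss_fmax :: "nat \<Rightarrow> 'b ss_state \<Rightarrow> 'b \<Rightarrow> nat" where
  "ss_fmax m S i = (case S i of Some (c, er) \<Rightarrow> c
     | None \<Rightarrow> (if card (dom S) = m then Min {c. \<exists>k er. S k = Some (c, er)} else 0))"

definition depth_input :: "nat \<Rightarrow> 'a stream \<Rightarrow> ('a list \<times> nat) list" where
  "depth_input d xs = map (\<lambda>(e, c). (take d e, c)) xs"

definition postorder :: "'a list set \<Rightarrow> 'a list list \<Rightarrow> bool" where
  "postorder T L \<longleftrightarrow> distinct L \<and> set L = T \<and>
     (\<forall>i<length L. \<forall>j<length L. strict_prefix (L ! j) (L ! i) \<longrightarrow> i < j)"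

definition out_step :: "nat \<Rightarrow> (nat \<Rightarrow> 'a list ss_state) \<Rightarrow> real \<Rightarrow> 'a list
     \<Rightarrow> ('a list \<Rightarrow> nat) \<times> 'a list set \<Rightarrow> ('a list \<Rightarrow> nat) \<times> 'a list set" where
  "out_step m S thr e sP =
     (let s = fst sP; P = snd sP;
          fmn = ss_fmin (S (length e)) e; fmx = ss_fmax m (S (length e)) e in
      if real fmx - real (s e) \<ge> thr
      then ((if e \<noteq> [] then s(butlast e := s (butlast e) + fmn) else s), insert e P)
      else ((if e \<noteq> [] then s(butlast e := s (butlast e) + s e) else s), P))"

definition output_set :: "nat \<Rightarrow> (nat \<Rightarrow> 'a list ss_state) \<Rightarrow> real \<Rightarrow> 'a list list \<Rightarrow> 'a list set" where
  "output_set m S thr L = snd (fold (out_step m S thr) L (\<lambda>_. 0, {}))"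

end

theory Submission imports Defs begin

definition freq :: "('b \<times> nat) list \<Rightarrow> 'b \<Rightarrow> nat" where
  "freq ys i = sum_list (map snd (filter (\<lambda>(j,c). j = i) ys))"
definition ntot :: "('b \<times> nat) list \<Rightarrow> nat" where
  "ntot ys = sum_list (map snd ys)"
definition cnt :: "'b ss_state \<Rightarrow> 'b \<Rightarrow> nat" where
  "cnt S k = (case S k of Some (c,_) \<Rightarrow> c | None \<Rightarrow> 0)"

lemma freq_snoc[simp]: "freq (ys @ [(i,c)]) k = freq ys k + (if k = i then c else 0)"
  by (simp add: freq_def)
lemma ntot_snoc[simp]: "ntot (ys @ [(i,c)]) = ntot ys + c"
  by (simp add: ntot_def)
lemma freq_Nil[simp]: "freq [] k = 0" by (simp add: freq_def)
lemma ntot_Nil[simp]: "ntot [] = 0" by (simp add: ntot_def)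

definition ssinv :: "nat \<Rightarrow> 'b ss_state \<Rightarrow> ('b \<times> nat) list \<Rightarrow> bool" where
  "ssinv m S ys \<longleftrightarrow> finite (dom S) \<and> card (dom S) \<le> m \<and> sum (cnt S) (dom S) = ntot ys
   \<and> (\<forall>i c er. S i = Some (c,er) \<longrightarrow> er \<le> c \<and> c \<le> freq ys i + er \<and> freq ys i \<le> c \<and> m*er \<le> ntot ys)
   \<and> (\<forall>i. S i = None \<longrightarrow> card (dom S) < m \<longrightarrow> freq ys i = 0)
   \<and> (\<forall>i. S i = None \<longrightarrow> \<not> card (dom S) < m \<longrightarrow> (\<forall>k c er. S k = Some (c,er) \<longrightarrow> freq ys i \<le> c))"

lemma ss_step_inv:
  assumes st: "ss_step m S (i,c) S1" and inv: "ssinv m S ys"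
  shows "ssinv m S1 (ys@[(i,c)])"
  using st
proof cases
  case (present x er)
  have dom1: "dom S1 = dom S" using present by auto
  have fin: "finite (dom S)" and card: "card (dom S) \<le> m"
    and sm: "sum (cnt S) (dom S) = ntot ys" using inv by (auto simp: ssinv_def)
  have idom: "i \<in> dom S" using present by auto
  have "sum (cnt S1) (dom S) = cnt S1 i + sum (cnt S1) (dom S - {i})"
    using fin idom by (simp add: sum.remove)
  also have "sum (cnt S1) (dom S - {i}) = sum (cnt S) (dom S - {i})"
    by (rule sum.cong) (auto simp: present cnt_def)
  also have "cnt S1 i = cnt S i + c" using present by (simp add: cnt_def)
  finally have "sum (cnt S1) (dom S) = sum (cnt S) (dom S) + c"
    using fin idom by (simp add: sum.remove)
  with sm have sm1: "sum (cnt S1) (dom S1) = ntot (ys @ [(i,c)])" by (simp add: dom1)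
  show ?thesis
    unfolding ssinv_def
  proof (intro conjI; (intro allI impI)?)
    show "finite (dom S1)" "card (dom S1) \<le> m" using fin card dom1 by auto
    show "sum (cnt S1) (dom S1) = ntot (ys @ [(i,c)])" by (rule sm1)
  next
    fix k c' er' assume a: "S1 k = Some (c', er')"
    have I3: "\<forall>i c er. S i = Some (c,er) \<longrightarrow> er \<le> c \<and> c \<le> freq ys i + er \<and> freq ys i \<le> c \<and> m*er \<le> ntot ys"
      using inv unfolding ssinv_def by blast
    show "er' \<le> c' \<and> c' \<le> freq (ys @ [(i, c)]) k + er' \<and> freq (ys @ [(i, c)]) k \<le> c' \<and> m * er' \<le> ntot (ys @ [(i, c)])"
    proof (cases "k = i")
      case True then have "c' = x + c" "er' = er" using a present by auto
      moreover have "er \<le> x \<and> x \<le> freq ys i + er \<and> freq ys i \<le> x \<and> m*er \<le> ntot ys" using I3 present by blast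
      ultimately show ?thesis using True by simp
    next
      case False then have "S k = Some (c',er')" using a present by auto
      then have "er' \<le> c' \<and> c' \<le> freq ys k + er' \<and> freq ys k \<le> c' \<and> m*er' \<le> ntot ys" using I3 by blast
      then show ?thesis using False by simp
    qed
  next
    fix k assume "S1 k = None" "card (dom S1) < m"
    then show "freq (ys @ [(i, c)]) k = 0" using inv present dom1 unfolding ssinv_def
      by (auto split: if_splits)
  next
    fix k k' c' er' assume "S1 k = None" "\<not> card (dom S1) < m" "S1 k' = Some (c', er')"
    then show "freq (ys @ [(i, c)]) k \<le> c'" using inv present dom1 unfolding ssinv_def
      by (auto split: if_splits) (fastforce+)
  qed
next
  case add
  have fin: "finite (dom S)" and sm: "sum (cnt S) (dom S) = ntot ys" using inv by (auto simp: ssinv_def)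
  have idom: "i \<notin> dom S" using add by auto
  have dom1: "dom S1 = insert i (dom S)" using add by auto
  have card1: "card (dom S1) = Suc (card (dom S))" using dom1 fin idom by simp
  have "sum (cnt S1) (dom S1) = cnt S1 i + sum (cnt S1) (dom S)"
    unfolding dom1 using fin idom by (rule sum.insert)
  also have "sum (cnt S1) (dom S) = sum (cnt S) (dom S)"
    by (rule sum.cong) (use idom add in \<open>auto simp: cnt_def\<close>)
  moreover have ci: "cnt S1 i = c" using add by (simp add: cnt_def)
  ultimately have sm1: "sum (cnt S1) (dom S1) = ntot (ys @ [(i,c)])" using sm by simp
  have fi: "freq ys i = 0" using inv add unfolding ssinv_def by auto
  have fk: "\<And>k. S k = None \<Longrightarrow> freq ys k = 0" using inv add unfolding ssinv_def by auto
  show ?thesis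
    unfolding ssinv_def
  proof (intro conjI; (intro allI impI)?)
    show "finite (dom S1)" "card (dom S1) \<le> m" using fin card1 dom1 add by auto
    show "sum (cnt S1) (dom S1) = ntot (ys @ [(i,c)])" by (rule sm1)
  next
    fix k c' er' assume a: "S1 k = Some (c', er')"
    have I3: "\<forall>i c er. S i = Some (c,er) \<longrightarrow> er \<le> c \<and> c \<le> freq ys i + er \<and> freq ys i \<le> c \<and> m*er \<le> ntot ys"
      using inv unfolding ssinv_def by blast
    show "er' \<le> c' \<and> c' \<le> freq (ys @ [(i, c)]) k + er' \<and> freq (ys @ [(i, c)]) k \<le> c' \<and> m * er' \<le> ntot (ys @ [(i, c)])"
    proof (cases "k = i")
      case True then have "c' = c" "er' = 0" using a add by auto
      then show ?thesis using True fi by simp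
    next
      case False then have "S k = Some (c',er')" using a add by auto
      then have "er' \<le> c' \<and> c' \<le> freq ys k + er' \<and> freq ys k \<le> c' \<and> m*er' \<le> ntot ys" using I3 by blast
      then show ?thesis using False by simp
    qed
  next
    fix k assume "S1 k = None" "card (dom S1) < m"
    then show "freq (ys @ [(i, c)]) k = 0" using fk add by (auto split: if_splits)
  next
    fix k k' c' er' assume "S1 k = None" "\<not> card (dom S1) < m" "S1 k' = Some (c', er')"
    then show "freq (ys @ [(i, c)]) k \<le> c'" using fk add by (auto split: if_splits)
  qed
next
  case (replace j cj ej)
  have fin: "finite (dom S)" and sm: "sum (cnt S) (dom S) = ntot ys" and cardm: "card (dom S) \<le> m"
    using inv by (auto simp: ssinv_def)
  have cardeq: "card (dom S) = m" using cardm replace by auto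
  have idom: "i \<notin> dom S" using replace by auto
  have jdom: "j \<in> dom S" using replace by auto
  have ij: "i \<noteq> j" using idom jdom by auto
  have dom1: "dom S1 = insert i (dom S - {j})" using replace ij by auto
  have card1: "card (dom S1) = m" using dom1 fin idom jdom cardeq
    by (simp add: card_Diff_singleton) (metis Suc_pred card_gt_0_iff empty_iff)
  have "sum (cnt S1) (dom S1) = cnt S1 i + sum (cnt S1) (dom S - {j})"
    unfolding dom1 using fin idom by (intro sum.insert) auto
  also have "sum (cnt S1) (dom S - {j}) = sum (cnt S) (dom S - {j})"
    by (rule sum.cong) (use idom replace in \<open>auto simp: cnt_def\<close>)
  also have "sum (cnt S) (dom S - {j}) + cnt S j = sum (cnt S) (dom S)"
    using fin jdom by (simp add: sum.remove)
  moreover have "cnt S1 i = cj + c" "cnt S j = cj" using replace by (simp_all add: cnt_def)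
  ultimately have sm1: "sum (cnt S1) (dom S1) = ntot (ys @ [(i,c)])" using sm by simp
  have "card (dom S) * cj \<le> sum (cnt S) (dom S)"
    using sum_bounded_below[of "dom S" cj "cnt S"] replace by (force simp: cnt_def)
  hence mcj: "m * cj \<le> ntot ys" using cardeq sm by simp
  have I5: "\<forall>i. S i = None \<longrightarrow> \<not> card (dom S) < m \<longrightarrow> (\<forall>k c er. S k = Some (c,er) \<longrightarrow> freq ys i \<le> c)"
    using inv unfolding ssinv_def by blast
  have I3: "\<forall>i c er. S i = Some (c,er) \<longrightarrow> er \<le> c \<and> c \<le> freq ys i + er \<and> freq ys i \<le> c \<and> m*er \<le> ntot ys"
    using inv unfolding ssinv_def by blast
  have fk: "\<And>k. S k = None \<Longrightarrow> freq ys k \<le> cj" using I5 replace by blast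
  have fi: "freq ys i \<le> cj" using fk replace by blast
  have fj: "freq ys j \<le> cj" using I3 replace by blast
  have ge: "\<And>k x y. S k = Some (x,y) \<Longrightarrow> cj \<le> x" using replace by auto
  show ?thesis
    unfolding ssinv_def
  proof (intro conjI; (intro allI impI)?)
    show "finite (dom S1)" "card (dom S1) \<le> m" using fin card1 dom1 by auto
    show "sum (cnt S1) (dom S1) = ntot (ys @ [(i,c)])" by (rule sm1)
  next
    fix k c' er' assume a: "S1 k = Some (c', er')"
    have I3: "\<forall>i c er. S i = Some (c,er) \<longrightarrow> er \<le> c \<and> c \<le> freq ys i + er \<and> freq ys i \<le> c \<and> m*er \<le> ntot ys"
      using inv unfolding ssinv_def by blast
    show "er' \<le> c' \<and> c' \<le> freq (ys @ [(i, c)]) k + er' \<and> freq (ys @ [(i, c)]) k \<le> c' \<and> m * er' \<le> ntot (ys @ [(i, c)])"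
    proof (cases "k = i")
      case True then have "c' = cj + c" "er' = cj" using a replace by auto
      then show ?thesis using True fi mcj by simp
    next
      case False then have "S k = Some (c',er')" using a replace by (auto split: if_splits)
      then have "er' \<le> c' \<and> c' \<le> freq ys k + er' \<and> freq ys k \<le> c' \<and> m*er' \<le> ntot ys" using I3 by blast
      then show ?thesis using False by simp
    qed
  next
    fix k assume "S1 k = None" "card (dom S1) < m"
    then show "freq (ys @ [(i, c)]) k = 0" using card1 by simp
  next
    fix k k' c' er' assume a: "S1 k = None" "\<not> card (dom S1) < m" "S1 k' = Some (c', er')"
    have "freq ys k \<le> cj" using a fk fj replace by (auto split: if_splits)
    moreover have "k \<noteq> i" using a replace by auto
    moreover have "cj \<le> c'" using a ge replace by (auto split: if_splits)
    ultimately show "freq (ys @ [(i, c)]) k \<le> c'" by simp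
  qed
qed

lemma ss_run_inv: "ss_run m S ys S' \<Longrightarrow> ssinv m S zs \<Longrightarrow> ssinv m S' (zs @ ys)"
proof (induction arbitrary: zs rule: ss_run.induct)
  case (Nil S) then show ?case by simp
next
  case (Cons S x S1 xs S2)
  obtain i c where x: "x = (i,c)" by (cases x)
  have "ssinv m S1 (zs @ [x])" using ss_step_inv[of m S i c S1 zs] Cons.hyps(1) Cons.prems x by simp
  then have "ssinv m S2 ((zs @ [x]) @ xs)" by (rule Cons.IH)
  then show ?case by simp
qed

lemma ssinv_empty: "m > 0 \<Longrightarrow> ssinv m Map.empty []"
  by (simp add: ssinv_def)

lemma ssinv_bounds:
  assumes inv: "ssinv m S ys" and m: "m > 0"
  shows "ss_fmin S p \<le> freq ys p \<and> freq ys p \<le> ss_fmax m S p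
     \<and> m * (ss_fmax m S p - ss_fmin S p) \<le> ntot ys"
proof (cases "S p")
  case (Some v)
  obtain c er where v: "v = (c,er)" by (cases v)
  have "er \<le> c \<and> c \<le> freq ys p + er \<and> freq ys p \<le> c \<and> m*er \<le> ntot ys"
    using inv Some v unfolding ssinv_def by blast
  then show ?thesis using Some v unfolding ss_fmin_def ss_fmax_def by auto
next
  case None
  show ?thesis
  proof (cases "card (dom S) < m")
    case True
    then show ?thesis using inv None unfolding ssinv_def ss_fmin_def ss_fmax_def by auto
  next
    case False
    have fin: "finite (dom S)" and sm: "sum (cnt S) (dom S) = ntot ys" and cardm: "card (dom S) \<le> m"
      using inv by (auto simp: ssinv_def)
    have ceq: "card (dom S) = m" using False cardm by simp
    define V where "V = {c. \<exists>k er. S k = Some (c, er)}"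
    have "V \<subseteq> cnt S ` dom S" unfolding V_def cnt_def by force
    hence finV: "finite V" using fin finite_subset by blast
    have "dom S \<noteq> {}" using ceq m by auto
    then obtain k0 where "k0 \<in> dom S" by blast
    hence neV: "V \<noteq> {}" unfolding V_def by auto
    have "\<forall>k c er. S k = Some(c,er) \<longrightarrow> freq ys p \<le> c"
      using inv None False unfolding ssinv_def by blast
    hence fp: "freq ys p \<le> Min V"
      using finV neV unfolding V_def by (auto intro!: Min.boundedI)
    have "card (dom S) * Min V \<le> sum (cnt S) (dom S)"
    proof (rule sum_bounded_below[of "dom S" "Min V" "cnt S", simplified])
      fix k assume "k \<in> dom S"
      then obtain c er where "S k = Some (c,er)" by auto
      then have "cnt S k \<in> V" unfolding V_def cnt_def by auto
      then show "Min V \<le> cnt S k" using finV by simp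
    qed
    then have "m * Min V \<le> ntot ys" using ceq sm by simp
    then show ?thesis using None ceq fp unfolding ss_fmin_def ss_fmax_def V_def by simp
  qed
qed


definition wsum :: "('b \<times> nat) list \<Rightarrow> ('b \<times> nat \<Rightarrow> bool) \<Rightarrow> nat" where
  "wsum xs Q = sum_list (map snd (filter Q xs))"

lemma wsum_mono: "(\<And>x. x \<in> set xs \<Longrightarrow> Q x \<Longrightarrow> R x) \<Longrightarrow> wsum xs Q \<le> wsum xs R"
  by (induction xs) (auto simp: wsum_def)

lemma wsum_disj: "(\<And>x. x \<in> set xs \<Longrightarrow> Q x \<Longrightarrow> R x \<Longrightarrow> False) \<Longrightarrow>
   wsum xs (\<lambda>x. Q x \<or> R x) = wsum xs Q + wsum xs R"
  by (induction xs) (auto simp: wsum_def)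

definition Gc :: "'a stream \<Rightarrow> 'a list set \<Rightarrow> 'a list \<Rightarrow> nat" where
  "Gc xs P p = wsum xs (\<lambda>(l,c). prefix p l \<and> (\<exists>q\<in>P. strict_prefix p q \<and> prefix q l))"

definition Wc :: "'a stream \<Rightarrow> 'a list set \<Rightarrow> 'a list set \<Rightarrow> nat" where
  "Wc xs P C = wsum xs (\<lambda>(l,c). \<exists>k\<in>C. \<exists>q\<in>P. prefix k q \<and> prefix q l)"

definition kids :: "'a list list \<Rightarrow> 'a list \<Rightarrow> 'a list set" where
  "kids M e = {c \<in> set M. c \<noteq> [] \<and> butlast c = e}"

lemma ccount_G: "ccount xs P p + Gc xs P p = ucount xs p"
  by (induction xs) (auto simp: ccount_def Gc_def ucount_def wsum_def)

lemma ccount_anti: "P \<subseteq> P' \<Longrightarrow> ccount xs P' p \<le> ccount xs P p"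
  unfolding ccount_def using wsum_mono[of xs] unfolding wsum_def by (auto intro!: wsum_mono[unfolded wsum_def])

lemma Wc_mono: "P \<subseteq> P' \<Longrightarrow> C \<subseteq> C' \<Longrightarrow> Wc xs P C \<le> Wc xs P' C'"
  unfolding Wc_def by (rule wsum_mono) blast

lemma prefix_same_len: "prefix k l \<Longrightarrow> prefix c l \<Longrightarrow> length k = length c \<Longrightarrow> k = c"
  by (metis prefix_length_prefix prefix_order.antisym order_refl)

lemma Wc_insert:
  assumes "c \<notin> C" "\<forall>k\<in>C. length k = length c"
  shows "Wc xs P (insert c C) = Wc xs P C + Wc xs P {c}"
proof -
  have "Wc xs P (insert c C) = wsum xs (\<lambda>x. (\<lambda>(l,_). \<exists>k\<in>C. \<exists>q\<in>P. prefix k q \<and> prefix q l) x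
        \<or> (\<lambda>(l,_). \<exists>k\<in>{c}. \<exists>q\<in>P. prefix k q \<and> prefix q l) x)"
    unfolding Wc_def by (rule arg_cong[where f="wsum xs"]) auto
  also have "\<dots> = Wc xs P C + Wc xs P {c}"
    unfolding Wc_def
  proof (rule wsum_disj)
    fix x assume a: "(\<lambda>(l,_). \<exists>k\<in>C. \<exists>q\<in>P. prefix k q \<and> prefix q l) x"
      "(\<lambda>(l,_). \<exists>k\<in>{c}. \<exists>q\<in>P. prefix k q \<and> prefix q l) x"
    obtain l n where x: "x = (l,n)" by (cases x)
    from a x obtain k q q' where "k \<in> C" "prefix k q" "prefix q l" "prefix c q'" "prefix q' l" by auto
    then have "k = c" using assms prefix_same_len[of k l c] by (meson prefix_order.trans)
    with \<open>k \<in> C\<close> assms show False by simp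
  qed
  finally show ?thesis .
qed

lemma prefix_kid: "k \<in> kids M c \<Longrightarrow> strict_prefix c k"
  unfolding kids_def
  by (metis (mono_tags, lifting) mem_Collect_eq prefixeq_butlast prefix_order.dual_order.not_eq_order_implies_strict
       butlast_snoc append_butlast_last_id length_butlast diff_less length_greater_0_conv zero_less_one nat_neq_iff)

lemma Wc_kids_G: "Wc xs P (kids M c) \<le> Gc xs P c"
  unfolding Wc_def Gc_def
proof (rule wsum_mono)
  fix x assume "(\<lambda>(l,_). \<exists>k\<in>kids M c. \<exists>q\<in>P. prefix k q \<and> prefix q l) x"
  then obtain l n k q where x: "x = (l,n)" "k \<in> kids M c" "q\<in>P" "prefix k q" "prefix q l" by auto
  have "strict_prefix c k" using x prefix_kid by blast
  then have "strict_prefix c q" using x by (meson prefix_order.less_le_trans)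
  then show "(\<lambda>(l,c'). prefix c l \<and> (\<exists>q\<in>P. strict_prefix c q \<and> prefix q l)) x"
    using x by (auto intro: prefix_order.trans dest: prefix_order.less_imp_le)
qed

lemma Wc_kids_H: "Wc xs P (kids M c) \<le> Wc xs P {c}"
  unfolding Wc_def
proof (rule wsum_mono)
  fix x assume "(\<lambda>(l,_). \<exists>k\<in>kids M c. \<exists>q\<in>P. prefix k q \<and> prefix q l) x"
  then obtain l n k q where x: "x = (l,n)" "k \<in> kids M c" "q\<in>P" "prefix k q" "prefix q l" by auto
  have "strict_prefix c k" using x prefix_kid by blast
  then have "prefix c q" using x by (meson prefix_order.less_le_trans prefix_order.less_imp_le)
  then show "(\<lambda>(l,_). \<exists>k\<in>{c}. \<exists>q\<in>P. prefix k q \<and> prefix q l) x" using x by auto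
qed

lemma ucount_H: "c \<in> P \<Longrightarrow> ucount xs c \<le> Wc xs P {c}"
  unfolding ucount_def Wc_def using wsum_mono[of xs] unfolding wsum_def
  by (auto intro!: wsum_mono[unfolded wsum_def])

lemma kids_snoc: "kids (M @ [c]) e = kids M e \<union> (if c \<noteq> [] \<and> butlast c = e then {c} else {})"
  unfolding kids_def by auto

lemma kids_len: "k \<in> kids M e \<Longrightarrow> length k = Suc (length e)"
  unfolding kids_def by auto

definition finv :: "'a stream \<Rightarrow> real \<Rightarrow> 'a list list \<Rightarrow> ('a list \<Rightarrow> nat) \<times> 'a list set \<Rightarrow> bool" where
  "finv xs thr M sP \<longleftrightarrow> snd sP \<subseteq> set M \<and> (\<forall>e. fst sP e \<le> Wc xs (snd sP) (kids M e))
     \<and> (\<forall>p\<in>set M. p \<notin> snd sP \<longrightarrow> real (ccount xs (snd sP) p) < thr)"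

lemma finv_step:
  assumes inv: "finv xs thr M (s,P)" and cM: "c \<notin> set M"
    and acc: "ss_fmin (S (length c)) c \<le> ucount xs c" "ucount xs c \<le> ss_fmax m (S (length c)) c"
  shows "finv xs thr (M @ [c]) (out_step m S thr c (s,P))"
proof -
  let ?fmn = "ss_fmin (S (length c)) c" and ?fmx = "ss_fmax m (S (length c)) c"
  have Psub: "P \<subseteq> set M" and sI: "\<And>e. s e \<le> Wc xs P (kids M e)"
    and cov: "\<And>p. p \<in> set M \<Longrightarrow> p \<notin> P \<Longrightarrow> real (ccount xs P p) < thr"
    using inv unfolding finv_def by auto
  have ckids: "\<And>e. c \<notin> kids M e" using cM unfolding kids_def by auto
  show ?thesis
  proof (cases "real ?fmx - real (s c) \<ge> thr")
    case True
    let ?s' = "if c \<noteq> [] then s(butlast c := s (butlast c) + ?fmn) else s"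
    have os: "out_step m S thr c (s,P) = (?s', insert c P)"
      using True unfolding out_step_def Let_def by simp
    have sI': "?s' e \<le> Wc xs (insert c P) (kids (M@[c]) e)" for e
    proof (cases "c \<noteq> [] \<and> e = butlast c")
      case True
      have "?s' e = s e + ?fmn" using True by simp
      also have "\<dots> \<le> Wc xs (insert c P) (kids M e) + Wc xs (insert c P) {c}"
      proof -
        have "Wc xs P (kids M e) \<le> Wc xs (insert c P) (kids M e)" by (rule Wc_mono) auto
        moreover have "ucount xs c \<le> Wc xs (insert c P) {c}" by (rule ucount_H) simp
        ultimately show ?thesis using sI[of e] acc(1) by linarith
      qed
      also have "\<dots> = Wc xs (insert c P) (insert c (kids M e))"
      proof -
        have lc: "length c = Suc (length e)" using True by (cases c rule: rev_cases) auto
        then have "\<forall>k\<in>kids M e. length k = length c" using kids_len[of _ M e] by simp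
        then show ?thesis using Wc_insert[OF ckids] by simp
      qed
      also have "insert c (kids M e) = kids (M@[c]) e" using True kids_snoc by auto
      finally show ?thesis .
    next
      case False
      have "?s' e = s e" using False by auto
      also have "\<dots> \<le> Wc xs (insert c P) (kids (M@[c]) e)"
      proof -
        have "Wc xs P (kids M e) \<le> Wc xs (insert c P) (kids (M@[c]) e)" by (rule Wc_mono) (auto simp: kids_snoc)
        then show ?thesis using sI[of e] by linarith
      qed
      finally show ?thesis .
    qed
    have cov': "real (ccount xs (insert c P) p) < thr" if "p \<in> set (M@[c])" "p \<notin> insert c P" for p
      using that cov[of p] ccount_anti[of P "insert c P" xs p] by force
    show ?thesis unfolding os finv_def using Psub sI' cov' by auto
  next
    case False
    let ?s' = "if c \<noteq> [] then s(butlast c := s (butlast c) + s c) else s"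
    have os: "out_step m S thr c (s,P) = (?s', P)"
      using False unfolding out_step_def Let_def by simp
    have sI': "?s' e \<le> Wc xs P (kids (M@[c]) e)" for e
    proof (cases "c \<noteq> [] \<and> e = butlast c")
      case True
      have "?s' e = s e + s c" using True by simp
      also have "\<dots> \<le> Wc xs P (kids M e) + Wc xs P {c}"
        using sI[of e] sI[of c] Wc_kids_H[of xs P M c] by linarith
      also have "\<dots> = Wc xs P (insert c (kids M e))"
      proof -
        have lc: "length c = Suc (length e)" using True by (cases c rule: rev_cases) auto
        then have "\<forall>k\<in>kids M e. length k = length c" using kids_len[of _ M e] by simp
        then show ?thesis using Wc_insert[OF ckids] by simp
      qed
      also have "insert c (kids M e) = kids (M@[c]) e" using True kids_snoc by auto
      finally show ?thesis .
    next
      case False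
      have "?s' e = s e" using False by auto
      also have "\<dots> \<le> Wc xs P (kids (M@[c]) e)"
      proof -
        have "Wc xs P (kids M e) \<le> Wc xs P (kids (M@[c]) e)" by (rule Wc_mono) (auto simp: kids_snoc)
        then show ?thesis using sI[of e] by linarith
      qed
      finally show ?thesis .
    qed
    have "real (ccount xs P c) < thr"
    proof -
      have "ccount xs P c + s c \<le> ucount xs c"
        using ccount_G[of xs P c] sI[of c] Wc_kids_G[of xs P M c] by linarith
      then have "real (ccount xs P c) \<le> real ?fmx - real (s c)" using acc(2) by linarith
      then show ?thesis using False by linarith
    qed
    then have cov': "real (ccount xs P p) < thr" if "p \<in> set (M@[c])" "p \<notin> P" for p
      using that cov[of p] by auto
    show ?thesis unfolding os finv_def using Psub sI' cov' by auto
  qed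
qed

lemma finv_fold:
  "finv xs thr M sP \<Longrightarrow> distinct (M @ N) \<Longrightarrow>
   (\<forall>c\<in>set N. ss_fmin (S (length c)) c \<le> ucount xs c \<and> ucount xs c \<le> ss_fmax m (S (length c)) c) \<Longrightarrow>
   finv xs thr (M @ N) (fold (out_step m S thr) N sP)"
proof (induction N arbitrary: M sP)
  case Nil then show ?case by simp
next
  case (Cons c N)
  obtain s P where sP: "sP = (s,P)" by (cases sP)
  have "finv xs thr (M @ [c]) (out_step m S thr c (s,P))"
    using finv_step[of xs thr M s P c S m] Cons.prems sP by auto
  then have "finv xs thr ((M @ [c]) @ N) (fold (out_step m S thr) N (out_step m S thr c sP))"
    using Cons.IH[of "M @ [c]"] Cons.prems sP by auto
  then show ?case by simp
qed


lemma len_le_h: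
  assumes hier: "hierarchy T h" and p: "p \<in> T" shows "length p \<le> h"
proof -
  define A where "A = {q \<in> T. prefix p q}"
  have finA: "finite A" using hier unfolding hierarchy_def A_def by auto
  have "p \<in> A" using p unfolding A_def by auto
  define n where "n = Max (length ` A)"
  have "n \<in> length ` A" unfolding n_def using finA \<open>p \<in> A\<close> by (intro Max_in) auto
  then obtain q where q: "q \<in> A" "length q = n" by auto
  have mx: "\<And>r. r \<in> A \<Longrightarrow> length r \<le> length q" using q finA unfolding n_def by auto
  have "\<not> (\<exists>r\<in>T. strict_prefix q r)"
  proof
    assume "\<exists>r\<in>T. strict_prefix q r"
    then obtain r where r: "r \<in> T" "strict_prefix q r" by blast
    then have "r \<in> A" using q unfolding A_def by (auto dest: prefix_order.less_imp_le intro: prefix_order.trans)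
    then show False using mx r prefix_length_less by fastforce
  qed
  then have "length q = h" using hier q unfolding hierarchy_def A_def by auto
  moreover have "length p \<le> length q" using q unfolding A_def by (auto simp: prefix_length_le)
  ultimately show ?thesis by simp
qed

lemma take_prefix_iff: "length p \<le> length e \<Longrightarrow> (take (length p) e = p) = prefix p e"
  by (auto simp: prefix_def) (metis append_take_drop_id)

lemma freq_depth:
  assumes "\<forall>(e,c)\<in>set xs. length p \<le> length e"
  shows "freq (depth_input (length p) xs) p = ucount xs p"
  using assms
proof (induction xs)
  case Nil then show ?case by (simp add: freq_def depth_input_def ucount_def)
next
  case (Cons x xs)
  obtain e c where x: "x = (e,c)" by (cases x)
  have "length p \<le> length e" using Cons.prems x by auto
  then have "(take (length p) e = p) = prefix p e" by (rule take_prefix_iff)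
  then show ?case using Cons x by (auto simp: freq_def depth_input_def ucount_def)
qed

lemma ntot_depth: "ntot (depth_input d xs) = total xs"
  by (induction xs) (auto simp: ntot_def depth_input_def total_def)

theorem theorem1:
  fixes T :: "'a list set" and h :: nat and xs :: "'a stream"
    and phi eps :: real and m :: nat
    and S :: "nat \<Rightarrow> 'a list ss_state" and L :: "'a list list"
  assumes hier: "hierarchy T h"
    and stream: "valid_stream T xs"
    and phi: "0 < phi" "phi \<le> 1"
    and eps: "eps > 0" "m > 0" "1 / eps = real m"
    and runs: "\<forall>d\<le>h. ss_run m Map.empty (depth_input d xs) (S d)"
    and post: "postorder T L"
  shows "(\<forall>d\<le>h. card (dom (S d)) \<le> m)
    \<and> (\<forall>p\<in>output_set m S (phi * real (total xs)) L.
          ss_fmin (S (length p)) p \<le> ucount xs p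
        \<and> ucount xs p \<le> ss_fmax m (S (length p)) p
        \<and> real (ss_fmax m (S (length p)) p) - real (ss_fmin (S (length p)) p) \<le> eps * real (total xs))
    \<and> (\<forall>p\<in>T. p \<notin> output_set m S (phi * real (total xs)) L \<longrightarrow>
          real (ccount xs (output_set m S (phi * real (total xs)) L) p) < phi * real (total xs))"
proof -
  let ?thr = "phi * real (total xs)"
  have inv: "ssinv m (S d) (depth_input d xs)" if "d \<le> h" for d
    using ss_run_inv[of m Map.empty "depth_input d xs" "S d" "[]"] runs that ssinv_empty[OF eps(2)] by simp
  have lens: "\<forall>(e,c)\<in>set xs. h = length e"
    using stream hier unfolding valid_stream_def fully_specified_def hierarchy_def by auto
  have epsm: "eps = 1 / real m" using eps by (simp add: field_simps)
  have acc: "ss_fmin (S (length p)) p \<le> ucount xs p \<and> ucount xs p \<le> ss_fmax m (S (length p)) p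
        \<and> real (ss_fmax m (S (length p)) p) - real (ss_fmin (S (length p)) p) \<le> eps * real (total xs)"
    if pT: "p \<in> T" for p
  proof -
    have lp: "length p \<le> h" using len_le_h[OF hier pT] .
    have fq: "freq (depth_input (length p) xs) p = ucount xs p"
      using lens lp by (intro freq_depth) auto
    have b: "ss_fmin (S (length p)) p \<le> ucount xs p \<and> ucount xs p \<le> ss_fmax m (S (length p)) p
       \<and> m * (ss_fmax m (S (length p)) p - ss_fmin (S (length p)) p) \<le> total xs"
      using ssinv_bounds[OF inv[OF lp] eps(2), of p] fq ntot_depth[of "length p" xs] by simp
    let ?a = "ss_fmax m (S (length p)) p" and ?b = "ss_fmin (S (length p)) p"
    have "real m * (real ?a - real ?b) \<le> real (total xs)"
      using b by (metis le_trans of_nat_diff of_nat_le_iff of_nat_mult)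
    then have "real ?a - real ?b \<le> real (total xs) / real m"
      using eps(2) by (simp add: field_simps)
    then show ?thesis using b epsm by simp
  qed
  have fin0: "finv xs ?thr [] (\<lambda>_. 0, {})"
    by (simp add: finv_def kids_def Wc_def wsum_def)
  have dL: "distinct L" and sL: "set L = T" using post unfolding postorder_def by auto
  have "finv xs ?thr ([] @ L) (fold (out_step m S ?thr) L (\<lambda>_. 0, {}))"
    using finv_fold[OF fin0, of L S m] dL sL acc by auto
  then have F: "output_set m S ?thr L \<subseteq> T"
    "\<forall>p\<in>T. p \<notin> output_set m S ?thr L \<longrightarrow> real (ccount xs (output_set m S ?thr L) p) < ?thr"
    unfolding finv_def output_set_def using sL by auto
  have C: "\<forall>d\<le>h. card (dom (S d)) \<le> m" using inv unfolding ssinv_def by blast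
  show ?thesis using C F acc by blast
qed

end
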